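(* The map $(f,z_1,z_2,z_3,\omega_1,\omega_2)\mapsto(z_1,z_2,z_3,\omega_1,\omega_2)$ is a bijection from $\mathrm{Rat}_2^{\mathrm{tm}}$ onto the open subset of $(S^2)^5$ consisting of the $5$-tuples $(z_1,z_2,z_3,\omega_1,\omega_2)$ such that (a) $\omega_1\neq\omega_2$, and (b) for each $i\neq j$ the cross-ratio $$\frac{(z_i-\omega_1)(z_j-\omega_2)}{(z_j-\omega_1)(z_i-\omega_2)}\in\mathbf C\cup\{\infty\}$$ is well defined and different from $-1$. In other words, a totally marked quadratic rational map is uniquely determined by its fixed points and critical points, and exactly the $5$-tuples satisfying (a) and (b) occur.
   Context: $S^2=\hat{\mathbf C}$ is the Riemann sphere. $\mathrm{Rat}_2^{\mathrm{tm}}$ is the space of $6$-tuples $(f,z_1,z_2,z_3,\omega_1,\omega_2)$ where $f$ is a holomorphic degree-$2$ self-map of $S^2$, $z_1,z_2,z_3$ is an ordered list of the fixed points of $f$ with multiplicity (a double or triple fixed point listed twice or three times), and $\omega_1\neq\omega_2$ is an ordering of the two critical points of $f$. Cross-ratios involving $\infty$ are interpreted in the usual way by omitting the corresponding factors. *)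

theory Defs
  imports "HOL-Analysis.Analysis" "HOL-Computational_Algebra.Polynomial"
begin

datatype csphere = Fin complex | Inf

definition sph_open :: "csphere set \<Rightarrow> bool" where
  "sph_open U \<longleftrightarrow> open {z. Fin z \<in> U} \<and>
     (Inf \<in> U \<longrightarrow> (\<exists>R. \<forall>z. norm z > R \<longrightarrow> Fin z \<in> U))"

definition open5 ::
  "(csphere \<times> csphere \<times> csphere \<times> csphere \<times> csphere) set \<Rightarrow> bool" where
  "open5 S \<longleftrightarrow> (\<forall>(a,b,c,d,e)\<in>S. \<exists>U1 U2 U3 U4 U5.
      sph_open U1 \<and> sph_open U2 \<and> sph_open U3 \<and> sph_open U4 \<and> sph_open U5 \<and>
      a \<in> U1 \<and> b \<in> U2 \<and> c \<in> U3 \<and> d \<in> U4 \<and> e \<in> U5 \<and>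
      U1 \<times> U2 \<times> U3 \<times> U4 \<times> U5 \<subseteq> S)"

text \<open>Point of the sphere with homogeneous coordinates [a : b] (assuming (a,b) \<noteq> (0,0)).\<close>
definition hpt :: "complex \<Rightarrow> complex \<Rightarrow> csphere" where
  "hpt a b = (if b = 0 then Inf else Fin (a / b))"

text \<open>The map z \<mapsto> P(z)/Q(z) on the sphere, with P, Q of degree \<le> 2, viewed as the
  homogeneous map [x:y] \<mapsto> [y^2 P(x/y) : y^2 Q(x/y)].\<close>
definition ratmap2 :: "complex poly \<Rightarrow> complex poly \<Rightarrow> csphere \<Rightarrow> csphere" where
  "ratmap2 P Q w = (case w of
      Fin z \<Rightarrow> hpt (poly P z) (poly Q z)
    | Inf \<Rightarrow> hpt (coeff P 2) (coeff Q 2))"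

definition deg2_rep :: "complex poly \<Rightarrow> complex poly \<Rightarrow> bool" where
  "deg2_rep P Q \<longleftrightarrow> coprime P Q \<and> max (degree P) (degree Q) = 2"

definition Rat2 :: "(csphere \<Rightarrow> csphere) set" where
  "Rat2 = {f. \<exists>P Q. deg2_rep P Q \<and> f = ratmap2 P Q}"

text \<open>Multiplicity of w as a zero of the binary form of formal degree d whose
  dehomogenisation is p (the root at Inf has multiplicity d - degree p).\<close>
definition form_mult :: "nat \<Rightarrow> complex poly \<Rightarrow> csphere \<Rightarrow> nat" where
  "form_mult d p w = (case w of Fin z \<Rightarrow> order z p | Inf \<Rightarrow> d - degree p)"

text \<open>Fixed-point form x Q(x,y) - y P(x,y) (cubic), dehomogenised: t Q(t) - P(t).\<close>
definition fix_mult :: "complex poly \<Rightarrow> complex poly \<Rightarrow> csphere \<Rightarrow> nat" where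
  "fix_mult P Q w = form_mult 3 (pCons 0 Q - P) w"

text \<open>Critical points: zeros of the Wronskian form (formal degree 2),
  dehomogenised: P' Q - P Q'.\<close>
definition crit_mult :: "complex poly \<Rightarrow> complex poly \<Rightarrow> csphere \<Rightarrow> nat" where
  "crit_mult P Q w = form_mult 2 (pderiv P * Q - P * pderiv Q) w"

definition critical_points :: "complex poly \<Rightarrow> complex poly \<Rightarrow> csphere set" where
  "critical_points P Q = {w. crit_mult P Q w > 0}"

definition Rat2_tm ::
  "((csphere \<Rightarrow> csphere) \<times> csphere \<times> csphere \<times> csphere \<times> csphere \<times> csphere) set" where
  "Rat2_tm = {(f, z1, z2, z3, w1, w2). f \<in> Rat2 \<and>
      (\<exists>P Q. deg2_rep P Q \<and> f = ratmap2 P Q \<and>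
         (\<forall>w. count {#z1, z2, z3#} w = fix_mult P Q w) \<and>
         critical_points P Q = {w1, w2}) \<and> w1 \<noteq> w2}"

text \<open>The factor (a - b) in a cross-ratio; factors involving Inf (against a finite
  point) are omitted, i.e. replaced by 1; Inf - Inf = 0.\<close>
definition sdiff :: "csphere \<Rightarrow> csphere \<Rightarrow> complex" where
  "sdiff a b = (case (a, b) of
      (Fin x, Fin y) \<Rightarrow> x - y
    | (Inf, Inf) \<Rightarrow> 0
    | _ \<Rightarrow> 1)"

text \<open>The cross-ratio (z - w1)(z' - w2) / ((z' - w1)(z - w2)) as an element of C \<union> {Inf};
  None if it is not well defined (0/0).\<close>
definition cross_ratio ::
  "csphere \<Rightarrow> csphere \<Rightarrow> csphere \<Rightarrow> csphere \<Rightarrow> csphere option" where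
  "cross_ratio z z' w1 w2 =
     (let num = sdiff z w1 * sdiff z' w2; den = sdiff z' w1 * sdiff z w2 in
      if num = 0 \<and> den = 0 then None else Some (hpt num den))"

definition admissible ::
  "(csphere \<times> csphere \<times> csphere \<times> csphere \<times> csphere) set" where
  "admissible = {(z1, z2, z3, w1, w2). w1 \<noteq> w2 \<and>
      (let zs = [z1, z2, z3] in \<forall>i<3. \<forall>j<3. i \<noteq> j \<longrightarrow>
          (\<exists>c. cross_ratio (zs ! i) (zs ! j) w1 w2 = Some c \<and> c \<noteq> Fin (-1)))}"

end

theory Submission
  imports Defs "HOL-Computational_Algebra.Fundamental_Theorem_Algebra"
begin


lemma W_formula: "pderiv [:p0,p1,p2:] * [:q0,q1,q2:] - [:p0,p1,p2:] * pderiv [:q0,q1::complex,q2:] = [:p1*q0 - p0*q1, 2*(p2*q0 - p0*q2), p2*q1 - p1*q2:]"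
  by (simp add: pderiv_pCons algebra_simps)

lemma deg2_expand: "degree (P::complex poly) \<le> 2 \<Longrightarrow> P = [:coeff P 0, coeff P 1, coeff P 2:]"
  apply (rule poly_eqI)
  subgoal for n by (cases n; cases "n - 1"; auto simp: coeff_pCons coeff_eq_0 numeral_2_eq_2 numeral_3_eq_3 split: nat.split)
  done

lemma deg3_expand: "degree (P::complex poly) \<le> 3 \<Longrightarrow> P = [:coeff P 0, coeff P 1, coeff P 2, coeff P 3:]"
  apply (rule poly_eqI)
  subgoal for n by (cases n; cases "n - 1"; cases "n - 2"; auto simp: coeff_pCons coeff_eq_0 numeral_2_eq_2 numeral_3_eq_3 split: nat.split)
  done

lemma same_order_smult:
  fixes p q :: "complex poly"
  assumes "p \<noteq> 0" "q \<noteq> 0" "\<And>a. order a p = order a q"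
  shows "p = smult (lead_coeff p / lead_coeff q) q"
proof -
  have S: "{z. poly p z = 0} = {z. poly q z = 0}"
    using assms order_gt_0_iff[of p] order_gt_0_iff[of q] by auto
  have E: "(\<Prod>z|poly p z = 0. [:-z, 1:] ^ order z p) = (\<Prod>z|poly q z = 0. [:-z, 1:] ^ order z q)"
    using S assms(3) by simp
  have "p = smult (lead_coeff p) (\<Prod>z|poly q z = 0. [:-z, 1:] ^ order z q)"
    using complex_poly_decompose[of p] E by simp
  also have "(\<Prod>z|poly q z = 0. [:-z, 1:] ^ order z q) = smult (1 / lead_coeff q) q"
  proof -
    have "smult (1 / lead_coeff q) q = smult (1 / lead_coeff q) (smult (lead_coeff q) (\<Prod>z|poly q z = 0. [:-z, 1:] ^ order z q))"
      using complex_poly_decompose[of q] by simp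
    also have "\<dots> = (\<Prod>z|poly q z = 0. [:-z, 1:] ^ order z q)"
      using assms(2) by simp
    finally show ?thesis by simp
  qed
  finally show ?thesis by simp
qed

lemma no_common_root_coprime:
  fixes P Q :: "complex poly"
  assumes "P \<noteq> 0" "\<And>a. poly P a = 0 \<Longrightarrow> poly Q a \<noteq> 0"
  shows "coprime P Q"
proof (rule ccontr)
  assume nc: "\<not> coprime P Q"
  obtain g where g: "g dvd P" "g dvd Q" "\<not> is_unit g" using nc by (auto simp: coprime_def)
  have "g \<noteq> 0" using assms(1) g by auto
  moreover have "\<not> is_unit g" using g by simp
  ultimately have "degree g \<noteq> 0" using is_unit_iff_degree by blast
  then have "\<not> constant (poly g)" by (simp add: constant_degree)
  then obtain a where "poly g a = 0" using fundamental_theorem_of_algebra by blast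
  moreover note g
  ultimately have "poly P a = 0" "poly Q a = 0" by (auto simp: dvd_def)
  with assms(2) show False by blast
qed

lemma res_deg2:
  fixes p0 p1 p2 q0 q1 q2 :: complex
  assumes "(p2*q0 - p0*q2)^2 - (p2*q1 - p1*q2)*(p1*q0 - p0*q1) \<noteq> 0"
  shows "deg2_rep [:p0,p1,p2:] [:q0,q1,q2:]"
proof -
  have nz: "p2 \<noteq> 0 \<or> q2 \<noteq> 0" using assms by auto
  have "[:p0,p1,p2:] \<noteq> 0" using assms by auto
  moreover have "poly [:q0,q1,q2:] a \<noteq> 0" if "poly [:p0,p1,p2:] a = 0" for a
  proof
    assume "poly [:q0,q1,q2:] a = 0"
    then have hq: "q0 = -(q1*a + q2*a^2)" and hp: "p0 = -(p1*a + p2*a^2)" using that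
      by (simp_all add: algebra_simps power2_eq_square eq_neg_iff_add_eq_0)
    have "(p2*q0 - p0*q2)^2 - (p2*q1 - p1*q2)*(p1*q0 - p0*q1) = 0"
      unfolding hq hp by algebra
    with assms show False by simp
  qed
  ultimately have "coprime [:p0,p1,p2:] [:q0,q1,q2:]" by (rule no_common_root_coprime)
  moreover have "max (degree [:p0,p1,p2:]) (degree [:q0,q1,q2:]) = 2"
  proof -
    have "degree [:p0,p1,p2:] \<le> 2" "degree [:q0,q1,q2:] \<le> 2"
      by (auto simp: degree_pCons_le intro!: order.trans[OF degree_pCons_le])
    moreover have "degree [:p0,p1,p2:] = 2 \<or> degree [:q0,q1,q2:] = 2"
      using nz by auto
    ultimately show ?thesis by linarith
  qed
  ultimately show ?thesis by (simp add: deg2_rep_def)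
qed



definition hx :: "csphere \<Rightarrow> complex" where "hx p = (case p of Fin z \<Rightarrow> z | Inf \<Rightarrow> 1)"
definition hy :: "csphere \<Rightarrow> complex" where "hy p = (case p of Fin z \<Rightarrow> 1 | Inf \<Rightarrow> 0)"
definition lin :: "csphere \<Rightarrow> complex poly" where "lin p = [:- hx p, hy p:]"

lemma lin_Fin[simp]: "lin (Fin z) = [:-z, 1:]" by (simp add: lin_def hx_def hy_def)
lemma lin_Inf[simp]: "lin Inf = [:-1:]" by (simp add: lin_def hx_def hy_def)
lemma lin_nz[simp]: "lin p \<noteq> 0" by (cases p) auto

lemma order_lin: "order a (lin p) = (if p = Fin a then 1 else 0)"
proof (cases p)
  case (Fin z)
  show ?thesis
  proof (cases "z = a")
    case True then show ?thesis using Fin order_power_n_n[of a 1] by simp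
  next
    case False then show ?thesis using Fin by (auto intro!: order_0I)
  qed
qed (auto intro!: order_0I)

lemma degree_lin: "degree (lin p) = (if p = Inf then 0 else 1)"
  by (cases p) auto

definition Phi :: "csphere \<Rightarrow> csphere \<Rightarrow> csphere \<Rightarrow> complex poly" where
  "Phi a b c = lin a * lin b * lin c"
definition Tq :: "csphere \<Rightarrow> csphere \<Rightarrow> complex poly" where
  "Tq a b = lin a * lin b"

lemma Phi_nz: "Phi a b c \<noteq> 0" by (simp add: Phi_def)
lemma Tq_nz: "Tq a b \<noteq> 0" by (simp add: Tq_def)

lemma form_mult_Phi: "form_mult 3 (Phi a b c) w = count {#a, b, c#} w"
proof (cases w)
  case (Fin z)
  then show ?thesis
    by (simp add: form_mult_def Phi_def order_mult order_lin)
next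
  case Inf
  then show ?thesis
    by (simp add: form_mult_def Phi_def degree_mult_eq degree_lin)
qed

lemma form_mult_Tq: "form_mult 2 (Tq a b) w = count {#a, b#} w"
proof (cases w)
  case (Fin z)
  then show ?thesis
    by (simp add: form_mult_def Tq_def order_mult order_lin)
next
  case Inf
  then show ?thesis
    by (simp add: form_mult_def Tq_def degree_mult_eq degree_lin)
qed

lemma form_mult_smult: "c \<noteq> 0 \<Longrightarrow> form_mult d (smult c p) w = form_mult d p w"
  by (cases w) (simp_all add: form_mult_def order_smult)

lemma Phi_coeffs: "Phi a b c = [: -(hx a*hx b*hx c), hx a*hx b*hy c + hx a*hy b*hx c + hy a*hx b*hx c,
   -(hx a*hy b*hy c + hy a*hx b*hy c + hy a*hy b*hx c), hy a*hy b*hy c:]"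
  by (simp add: Phi_def lin_def algebra_simps)

lemma Tq_coeffs: "Tq a b = [: hx a*hx b, -(hx a*hy b + hy a*hx b), hy a*hy b:]"
  by (simp add: Tq_def lin_def algebra_simps)



abbreviation Wr :: "complex poly \<Rightarrow> complex poly \<Rightarrow> complex poly" where
  "Wr P Q \<equiv> pderiv P * Q - P * pderiv Q"

lemma deg2_rep_degs: "deg2_rep P Q \<Longrightarrow> degree P \<le> 2 \<and> degree Q \<le> 2"
  by (auto simp: deg2_rep_def)

lemma Wr_coeffs:
  assumes "degree P \<le> 2" "degree Q \<le> 2"
  shows "Wr P Q = [:coeff P 1 * coeff Q 0 - coeff P 0 * coeff Q 1,
     2*(coeff P 2 * coeff Q 0 - coeff P 0 * coeff Q 2), coeff P 2 * coeff Q 1 - coeff P 1 * coeff Q 2:]"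
  using W_formula deg2_expand[OF assms(1)] deg2_expand[OF assms(2)] by metis

lemma degree_Wr: "degree P \<le> 2 \<Longrightarrow> degree Q \<le> 2 \<Longrightarrow> degree (Wr P Q) \<le> 2"
  apply (subst Wr_coeffs, assumption+)
  by (auto intro!: order.trans[OF degree_pCons_le])

lemma Wr_nz:
  assumes "deg2_rep P Q" shows "Wr P Q \<noteq> 0"
proof
  assume W0: "Wr P Q = 0"
  have dP: "degree P \<le> 2" and dQ: "degree Q \<le> 2" using deg2_rep_degs[OF assms] by auto
  have cop: "coprime P Q" and md: "max (degree P) (degree Q) = 2" using assms by (auto simp: deg2_rep_def)
  define p0 p1 p2 q0 q1 q2 where "p0 = coeff P 0" "p1 = coeff P 1" "p2 = coeff P 2"
    "q0 = coeff Q 0" "q1 = coeff Q 1" "q2 = coeff Q 2"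
  have eP: "P = [:p0,p1,p2:]" and eQ: "Q = [:q0,q1,q2:]"
    using deg2_expand[OF dP] deg2_expand[OF dQ] p0_p1_p2_q0_q1_q2_def by auto
  have m: "p1*q0 = p0*q1" "p2*q0 = p0*q2" "p2*q1 = p1*q2"
    using W0 Wr_coeffs[OF dP dQ] unfolding p0_p1_p2_q0_q1_q2_def by auto
  show False
  proof (cases "P = 0")
    case True
    then have "is_unit Q" using cop by simp
    then have "degree Q = 0" by (metis is_unit_iff_degree not_is_unit_0)
    with True md show False by simp
  next
    case False
    obtain k where k: "Q = smult k P"
    proof (cases "p0 \<noteq> 0")
      case True
      show ?thesis by (rule that[of "q0/p0"]) (use True m in \<open>simp add: eP eQ field_simps\<close>)
    next
      case n0: False
      show ?thesis
      proof (cases "p1 \<noteq> 0")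
        case True
        show ?thesis by (rule that[of "q1/p1"]) (use True n0 m in \<open>simp add: eP eQ field_simps\<close>)
      next
        case n1: False
        then have "p2 \<noteq> 0" using n0 False eP by auto
        then show ?thesis by (intro that[of "q2/p2"]) (use n0 n1 m in \<open>simp add: eP eQ field_simps\<close>)
      qed
    qed
    have "P dvd Q" using k by (simp add: dvd_smult)
    then have "is_unit P" using cop by (meson coprime_common_divisor dvd_refl)
    then have "degree P = 0" using is_unit_iff_degree False by blast
    moreover have "degree Q \<le> degree P" using k by simp
    ultimately show False using md by simp
  qed
qed

lemma crit_order_one:
  assumes "deg2_rep P Q" "critical_points P Q = {w, w'}" "w \<noteq> w'" "w = Fin a"
  shows "order a (Wr P Q) = 1"
proof -
  have nz: "Wr P Q \<noteq> 0" by (rule Wr_nz[OF assms(1)])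
  have dW: "degree (Wr P Q) \<le> 2" using deg2_rep_degs[OF assms(1)] degree_Wr by blast
  have "Fin a \<in> critical_points P Q" using assms(2,4) by auto
  then have ca: "order a (Wr P Q) > 0"
    by (simp add: critical_points_def crit_mult_def form_mult_def)
  have "order a (Wr P Q) \<le> 1"
  proof (cases w')
    case Inf
    have "Inf \<in> critical_points P Q" using assms(2) Inf by auto
    then have "2 - degree (Wr P Q) > 0"
      by (simp add: critical_points_def crit_mult_def form_mult_def)
    then have "degree (Wr P Q) \<le> 1" by simp
    with order_degree[OF nz, of a] show ?thesis by simp
  next
    case (Fin b)
    have "a \<noteq> b" using assms(3,4) Fin by auto
    have "Fin b \<in> critical_points P Q" using assms(2) Fin by auto
    then have cb: "order b (Wr P Q) > 0"
      by (simp add: critical_points_def crit_mult_def form_mult_def)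
    have fin: "finite {x. poly (Wr P Q) x = 0}" using nz by (rule poly_roots_finite)
    have sub: "{a, b} \<subseteq> {x. poly (Wr P Q) x = 0}"
      using ca cb order_gt_0_iff[OF nz] by auto
    have "(\<Sum>x\<in>{a,b}. order x (Wr P Q)) \<le> (\<Sum>x | poly (Wr P Q) x = 0. order x (Wr P Q))"
      by (rule sum_mono2[OF fin sub]) auto
    also have "\<dots> \<le> degree (Wr P Q)" by (rule sum_order_le_degree[OF nz])
    finally show ?thesis using \<open>a \<noteq> b\<close> dW cb by simp
  qed
  with ca show ?thesis by simp
qed

lemma normalize_F:
  assumes "deg2_rep P Q" "\<forall>w. count {#z1, z2, z3#} w = fix_mult P Q w"
  shows "\<exists>c. c \<noteq> 0 \<and> pCons 0 Q - P = smult c (Phi z1 z2 z3)"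
proof -
  have F0: "pCons 0 Q - P \<noteq> 0"
  proof
    assume "pCons 0 Q - P = 0"
    then have eq: "P = [:0,1:] * Q" by simp
    have cop: "coprime P Q" and md: "max (degree P) (degree Q) = 2" using assms by (auto simp: deg2_rep_def)
    have "Q dvd P" unfolding eq by (rule dvd_triv_right)
    then have "is_unit Q" using cop by (meson coprime_common_divisor dvd_refl)
    then have "degree Q = 0" "Q \<noteq> 0" by (metis is_unit_iff_degree not_is_unit_0)+
    moreover have "degree P \<le> degree [:0,1::complex:] + degree Q" unfolding eq by (rule degree_mult_le)
    ultimately show False using md by simp
  qed
  have "\<And>a. order a (pCons 0 Q - P) = order a (Phi z1 z2 z3)"
  proof -
    fix a
    have "order a (pCons 0 Q - P) = fix_mult P Q (Fin a)" by (simp add: fix_mult_def form_mult_def)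
    also have "\<dots> = form_mult 3 (Phi z1 z2 z3) (Fin a)" using assms(2) form_mult_Phi by metis
    finally show "order a (pCons 0 Q - P) = order a (Phi z1 z2 z3)" by (simp add: form_mult_def)
  qed
  from same_order_smult[OF F0 Phi_nz this] F0 show ?thesis by (intro exI conjI) (auto simp: Phi_nz)
qed

lemma normalize_W:
  assumes "deg2_rep P Q" "critical_points P Q = {w1, w2}" "w1 \<noteq> w2"
  shows "\<exists>e. e \<noteq> 0 \<and> Wr P Q = smult e (Tq w1 w2)"
proof -
  have nz: "Wr P Q \<noteq> 0" by (rule Wr_nz[OF assms(1)])
  have "\<And>a. order a (Wr P Q) = order a (Tq w1 w2)"
  proof -
    fix a
    have T: "order a (Tq w1 w2) = count {#w1, w2#} (Fin a)"
      using form_mult_Tq[of w1 w2 "Fin a"] by (simp add: form_mult_def)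
    show "order a (Wr P Q) = order a (Tq w1 w2)"
    proof (cases "Fin a \<in> {w1, w2}")
      case True
      then consider "w1 = Fin a" | "w2 = Fin a" by auto
      then show ?thesis
      proof cases
        case 1
        then show ?thesis using crit_order_one[OF assms(1,2,3) 1] T assms(3) by auto
      next
        case 2
        have "critical_points P Q = {w2, w1}" using assms(2) by auto
        then show ?thesis using crit_order_one[OF assms(1) _ _ 2] T assms(3) 2 by auto
      qed
    next
      case False
      then have "Fin a \<notin> critical_points P Q" using assms(2) by simp
      then have "order a (Wr P Q) = 0"
        by (simp add: critical_points_def crit_mult_def form_mult_def)
      then show ?thesis using T False by auto
    qed
  qed
  from same_order_smult[OF nz Tq_nz this] nz show ?thesis by (intro exI conjI) (auto simp: Tq_nz)
qed



lemma coeff_pCons_numeral'[simp]: "coeff (pCons a p) (numeral n) = coeff p (pred_numeral n)"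
  by (simp add: numeral_eq_Suc)

lemma uniq:
  fixes T0 T1 T2 c c' :: complex and P Q P' Q' F :: "complex poly"
  assumes dl: "T1^2 - 4*T0*T2 \<noteq> 0" and c: "c \<noteq> 0"
    and aP: "2*coeff P 0*T2 - coeff P 1*T1 + 2*coeff P 2*T0 = 0"
    and aQ: "2*coeff Q 0*T2 - coeff Q 1*T1 + 2*coeff Q 2*T0 = 0"
    and aP': "2*coeff P' 0*T2 - coeff P' 1*T1 + 2*coeff P' 2*T0 = 0"
    and aQ': "2*coeff Q' 0*T2 - coeff Q' 1*T1 + 2*coeff Q' 2*T0 = 0"
    and dP: "degree P \<le> 2" and dQ: "degree Q \<le> 2" and dP': "degree P' \<le> 2" and dQ': "degree Q' \<le> 2"
    and F: "pCons 0 Q - P = smult c F" and F': "pCons 0 Q' - P' = smult c' F"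
  shows "P' = smult (c'/c) P \<and> Q' = smult (c'/c) Q"
proof -
  define p0 p1 p2 q0 q1 q2 where "p0 = coeff P 0" "p1 = coeff P 1" "p2 = coeff P 2"
    "q0 = coeff Q 0" "q1 = coeff Q 1" "q2 = coeff Q 2"
  define p0' p1' p2' q0' q1' q2' where "p0' = coeff P' 0" "p1' = coeff P' 1" "p2' = coeff P' 2"
    "q0' = coeff Q' 0" "q1' = coeff Q' 1" "q2' = coeff Q' 2"
  have eP: "P = [:p0,p1,p2:]" and eQ: "Q = [:q0,q1,q2:]"
    using deg2_expand[OF dP] deg2_expand[OF dQ] p0_p1_p2_q0_q1_q2_def by auto
  have eP': "P' = [:p0',p1',p2':]" and eQ': "Q' = [:q0',q1',q2':]"
    using deg2_expand[OF dP'] deg2_expand[OF dQ'] p0'_p1'_p2'_q0'_q1'_q2'_def by auto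
  have "smult c' (pCons 0 Q - P) = smult c (pCons 0 Q' - P')" using F F' by (simp add: mult.commute)
  then have "smult c' [:-p0, q0-p1, q1-p2, q2:] = smult c [:-p0', q0'-p1', q1'-p2', q2':]"
    by (simp add: eP eQ eP' eQ')
  then have e: "c'*p0 = c*p0'" "c'*(q0-p1) = c*(q0'-p1')" "c'*(q1-p2) = c*(q1'-p2')" "c'*q2 = c*q2'"
    by simp_all
  have a: "2*p0*T2 - p1*T1 + 2*p2*T0 = 0" "2*q0*T2 - q1*T1 + 2*q2*T0 = 0"
     "2*p0'*T2 - p1'*T1 + 2*p2'*T0 = 0" "2*q0'*T2 - q1'*T1 + 2*q2'*T0 = 0"
    using aP aQ aP' aQ' p0_p1_p2_q0_q1_q2_def p0'_p1'_p2'_q0'_q1'_q2'_def by auto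
  have D1: "(T1^2 - 4*T0*T2) * (c'*p1 - c*p1') = 0" using e a by algebra
  have D2: "(T1^2 - 4*T0*T2) * (c'*p2 - c*p2') = 0" using e a by algebra
  have x1: "c*p1' = c'*p1" using D1 dl by simp
  have x2: "c*p2' = c'*p2" using D2 dl by simp
  have x3: "c*q0' = c'*q0" using x1 e(2) by algebra
  have x4: "c*q1' = c'*q1" using x2 e(3) by algebra
  have "p1' = c'/c*p1" "p2' = c'/c*p2" "p0' = c'/c*p0"
    using x1 x2 c e(1) by (auto simp: field_simps)
  moreover have "q0' = c'/c*q0" "q1' = c'/c*q1" "q2' = c'/c*q2"
    using x3 x4 c e(4) by (auto simp: field_simps)
  ultimately show ?thesis by (simp add: eP eQ eP' eQ')
qed

definition solP :: "complex poly \<Rightarrow> complex poly \<Rightarrow> complex poly" where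
  "solP F T = (let f0 = coeff F 0; f1 = coeff F 1; f2 = coeff F 2; f3 = coeff F 3;
     T0 = coeff T 0; T1 = coeff T 1; T2 = coeff T 2; d = T1*T1 - 4*T0*T2;
     r1 = 2*f0*T2; r2 = T1*f2 - 2*T2*f1 - 2*T0*f3
     in [: -d*f0, -T1*r1 - 2*T0*r2, -T1*r2 - 2*T2*r1 :])"

definition solQ :: "complex poly \<Rightarrow> complex poly \<Rightarrow> complex poly" where
  "solQ F T = (let f0 = coeff F 0; f1 = coeff F 1; f2 = coeff F 2; f3 = coeff F 3;
     T0 = coeff T 0; T1 = coeff T 1; T2 = coeff T 2; d = T1*T1 - 4*T0*T2;
     r1 = 2*f0*T2; r2 = T1*f2 - 2*T2*f1 - 2*T0*f3
     in [: d*f1 + (-T1*r1 - 2*T0*r2), d*f2 + (-T1*r2 - 2*T2*r1), d*f3 :])"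

definition dlt :: "complex poly \<Rightarrow> complex" where
  "dlt T = coeff T 1 * coeff T 1 - 4 * coeff T 0 * coeff T 2"

lemma sol_F: "degree F \<le> 3 \<Longrightarrow> pCons 0 (solQ F T) - solP F T = smult (dlt T) F"
  apply (subst (3) deg3_expand[of F], assumption)
  by (simp add: solP_def solQ_def dlt_def Let_def algebra_simps)

lemma sol_aP: "2*coeff (solP F T) 0*coeff T 2 - coeff (solP F T) 1*coeff T 1 + 2*coeff (solP F T) 2*coeff T 0 = 0"
  by (simp add: solP_def Let_def) algebra

lemma sol_aQ: "2*coeff (solQ F T) 0*coeff T 2 - coeff (solQ F T) 1*coeff T 1 + 2*coeff (solQ F T) 2*coeff T 0 = 0"
  by (simp add: solQ_def Let_def) algebra

lemma deg_solP: "degree (solP F T) \<le> 2"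
  by (auto simp: solP_def Let_def intro!: order.trans[OF degree_pCons_le])
lemma deg_solQ: "degree (solQ F T) \<le> 2"
  by (auto simp: solQ_def Let_def intro!: order.trans[OF degree_pCons_le])

definition hc :: "csphere \<Rightarrow> complex \<times> complex" where "hc p = (hx p, hy p)"
definition det2 :: "complex \<times> complex \<Rightarrow> complex \<times> complex \<Rightarrow> complex" where
  "det2 a b = fst a * snd b - snd a * fst b"
definition NH :: "complex \<times> complex \<Rightarrow> complex \<times> complex \<Rightarrow> complex \<times> complex \<Rightarrow> complex \<times> complex \<Rightarrow> complex" where
  "NH a b c d = det2 a c * det2 b d + det2 b c * det2 a d"
definition NN :: "csphere \<Rightarrow> csphere \<Rightarrow> csphere \<Rightarrow> csphere \<Rightarrow> csphere \<Rightarrow> complex" where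
  "NN z1 z2 z3 w1 w2 = NH (hc z1) (hc z2) (hc w1) (hc w2) * NH (hc z1) (hc z3) (hc w1) (hc w2)
     * NH (hc z2) (hc z3) (hc w1) (hc w2)"

lemma sol_W_coeffs:
  fixes z1 z2 z3 w1 w2 :: csphere
  shows "coeff (solP (Phi z1 z2 z3) (Tq w1 w2)) 1 * coeff (solQ (Phi z1 z2 z3) (Tq w1 w2)) 0 - coeff (solP (Phi z1 z2 z3) (Tq w1 w2)) 0 * coeff (solQ (Phi z1 z2 z3) (Tq w1 w2)) 1 = 2 * NN z1 z2 z3 w1 w2 * coeff (Tq w1 w2) 0"
    "coeff (solP (Phi z1 z2 z3) (Tq w1 w2)) 2 * coeff (solQ (Phi z1 z2 z3) (Tq w1 w2)) 0 - coeff (solP (Phi z1 z2 z3) (Tq w1 w2)) 0 * coeff (solQ (Phi z1 z2 z3) (Tq w1 w2)) 2 = NN z1 z2 z3 w1 w2 * coeff (Tq w1 w2) 1"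
    "coeff (solP (Phi z1 z2 z3) (Tq w1 w2)) 2 * coeff (solQ (Phi z1 z2 z3) (Tq w1 w2)) 1 - coeff (solP (Phi z1 z2 z3) (Tq w1 w2)) 1 * coeff (solQ (Phi z1 z2 z3) (Tq w1 w2)) 2 = 2 * NN z1 z2 z3 w1 w2 * coeff (Tq w1 w2) 2"
  unfolding solP_def solQ_def Let_def Phi_coeffs Tq_coeffs NN_def NH_def det2_def hc_def
  by (simp_all, algebra+)

lemma degree_Tq: "degree (Tq w1 w2) \<le> 2"
  by (subst Tq_coeffs) (auto intro!: order.trans[OF degree_pCons_le])

lemma sol_W: "Wr (solP (Phi z1 z2 z3) (Tq w1 w2)) (solQ (Phi z1 z2 z3) (Tq w1 w2))
   = smult (2 * NN z1 z2 z3 w1 w2) (Tq w1 w2)"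
proof -
  have "Wr (solP (Phi z1 z2 z3) (Tq w1 w2)) (solQ (Phi z1 z2 z3) (Tq w1 w2))
     = [:2 * NN z1 z2 z3 w1 w2 * coeff (Tq w1 w2) 0, 2 * (NN z1 z2 z3 w1 w2 * coeff (Tq w1 w2) 1),
         2 * NN z1 z2 z3 w1 w2 * coeff (Tq w1 w2) 2:]"
    by (subst Wr_coeffs[OF deg_solP deg_solQ]) (simp only: sol_W_coeffs)
  also have "\<dots> = smult (2 * NN z1 z2 z3 w1 w2) [:coeff (Tq w1 w2) 0, coeff (Tq w1 w2) 1, coeff (Tq w1 w2) 2:]"
    by simp
  also have "[:coeff (Tq w1 w2) 0, coeff (Tq w1 w2) 1, coeff (Tq w1 w2) 2:] = Tq w1 w2"
    by (rule deg2_expand[symmetric, OF degree_Tq])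
  finally show ?thesis .
qed

lemma ratmap2_smult: "k \<noteq> 0 \<Longrightarrow> ratmap2 (smult k P) (smult k Q) = ratmap2 P Q"
  by (auto simp: fun_eq_iff ratmap2_def hpt_def split: csphere.split)

lemma Wr_smult: "Wr (smult k P) (smult k Q) = smult (k^2) (Wr P Q)"
  by (simp add: pderiv_smult power2_eq_square smult_diff_right mult_smult_left mult_smult_right)



lemma sdiff_det: "sdiff a b = (if b = Inf then -1 else 1) * det2 (hc a) (hc b)"
  by (cases a; cases b) (simp_all add: sdiff_def det2_def hc_def hx_def hy_def)

lemma cr_aux:
  fixes num den :: complex
  shows "(\<exists>c. (if num = 0 \<and> den = 0 then None else Some (hpt num den)) = Some c \<and> c \<noteq> Fin (-1))
     \<longleftrightarrow> num + den \<noteq> 0"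
proof (cases "den = 0")
  case True
  then show ?thesis by (auto simp: hpt_def)
next
  case False
  have "num / den \<noteq> -1 \<longleftrightarrow> num + den \<noteq> 0"
  proof -
    have "num / den = -1 \<longleftrightarrow> num = - den" using False by (simp add: divide_eq_eq)
    also have "\<dots> \<longleftrightarrow> num + den = 0" by (simp add: eq_neg_iff_add_eq_0)
    finally show ?thesis by simp
  qed
  then show ?thesis using False by (auto simp: hpt_def)
qed

lemma cr_iff: "(\<exists>c. cross_ratio a b w1 w2 = Some c \<and> c \<noteq> Fin (-1))
   \<longleftrightarrow> NH (hc a) (hc b) (hc w1) (hc w2) \<noteq> 0"
proof -
  have "(\<exists>c. cross_ratio a b w1 w2 = Some c \<and> c \<noteq> Fin (-1))
     \<longleftrightarrow> sdiff a w1 * sdiff b w2 + sdiff b w1 * sdiff a w2 \<noteq> 0"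
    unfolding cross_ratio_def Let_def by (rule cr_aux)
  also have "sdiff a w1 * sdiff b w2 + sdiff b w1 * sdiff a w2
     = ((if w1 = Inf then -1 else 1) * (if w2 = Inf then -1 else 1)) * NH (hc a) (hc b) (hc w1) (hc w2)"
    by (simp add: sdiff_det NH_def algebra_simps)
  finally show ?thesis by auto
qed

lemma neq_det: "w1 \<noteq> w2 \<longleftrightarrow> det2 (hc w1) (hc w2) \<noteq> 0"
  by (cases w1; cases w2) (simp_all add: det2_def hc_def hx_def hy_def)

lemma NH_sym: "NH b a c d = NH a b c d"
  by (simp add: NH_def algebra_simps)

lemma all3: "(\<forall>i<(3::nat). P i) \<longleftrightarrow> P 0 \<and> P 1 \<and> P 2"
proof
  assume "\<forall>i<3. P i" then show "P 0 \<and> P 1 \<and> P 2" by simp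
next
  assume h: "P 0 \<and> P 1 \<and> P 2"
  show "\<forall>i<3. P i"
  proof (intro allI impI)
    fix i :: nat assume "i < 3"
    then have "i = 0 \<or> i = 1 \<or> i = 2" by arith
    then show "P i" using h by auto
  qed
qed

lemma adm_iff: "(z1, z2, z3, w1, w2) \<in> admissible \<longleftrightarrow>
   w1 \<noteq> w2 \<and> NN z1 z2 z3 w1 w2 \<noteq> 0"
  unfolding admissible_def
  by (simp add: all3 cr_iff Let_def NN_def del: One_nat_def) (auto simp: NH_sym)

definition sc :: "complex \<Rightarrow> complex \<times> complex \<Rightarrow> complex \<times> complex" where
  "sc l v = (l * fst v, l * snd v)"

type_synonym c2 = "complex \<times> complex"

definition Hf :: "c2 \<Rightarrow> c2 \<Rightarrow> c2 \<Rightarrow> c2 \<Rightarrow> c2 \<Rightarrow> complex" where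
  "Hf v1 v2 v3 v4 v5 = det2 v4 v5 * NH v1 v2 v4 v5 * NH v1 v3 v4 v5 * NH v2 v3 v4 v5"

definition Hfun :: "c2 \<times> c2 \<times> c2 \<times> c2 \<times> c2 \<Rightarrow> complex" where
  "Hfun v = Hf (fst v) (fst (snd v)) (fst (snd (snd v))) (fst (snd (snd (snd v)))) (snd (snd (snd (snd v))))"

lemma Hfun_cont: "continuous_on UNIV Hfun"
  unfolding Hfun_def Hf_def NH_def det2_def by (intro continuous_intros)

lemma det2_sc: "det2 (sc l a) (sc m b) = l * m * det2 a b"
  by (simp add: det2_def sc_def algebra_simps)
lemma NH_sc: "NH (sc l1 a) (sc l2 b) (sc l3 c) (sc l4 d) = l1*l2*l3*l4 * NH a b c d"
  by (simp add: NH_def det2_sc algebra_simps)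

lemma Hf_sc: "Hf (sc l1 v1) (sc l2 v2) (sc l3 v3) (sc l4 v4) (sc l5 v5)
   = (l1^2 * l2^2 * l3^2 * l4^4 * l5^4) * Hf v1 v2 v3 v4 v5"
  by (simp add: Hf_def NH_sc det2_sc algebra_simps power2_eq_square power4_eq_xxxx)

lemma adm_Hf: "(z1, z2, z3, w1, w2) \<in> admissible \<longleftrightarrow> Hf (hc z1) (hc z2) (hc z3) (hc w1) (hc w2) \<noteq> 0"
  by (simp add: adm_iff Hf_def NN_def neq_det)

lemma nbhd:
  assumes "\<epsilon> > 0"
  shows "\<exists>U. sph_open U \<and> p \<in> U \<and> (\<forall>q\<in>U. \<exists>l. l \<noteq> 0 \<and> dist (sc l (hc q)) (hc p) < \<epsilon>)"
proof (cases p)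
  case (Fin z)
  let ?U = "Fin ` ball z \<epsilon>"
  have "{w. Fin w \<in> ?U} = ball z \<epsilon>" by auto
  then have "sph_open ?U" by (auto simp: sph_open_def)
  moreover have "p \<in> ?U" using Fin assms by auto
  moreover have "\<exists>l. l \<noteq> 0 \<and> dist (sc l (hc q)) (hc p) < \<epsilon>" if "q \<in> ?U" for q
  proof -
    obtain w where "q = Fin w" "dist z w < \<epsilon>" using \<open>q \<in> ?U\<close> by auto
    then show ?thesis using Fin
      by (intro exI[of _ 1]) (simp add: sc_def hc_def hx_def hy_def dist_Pair_Pair dist_commute)
  qed
  ultimately show ?thesis by blast
next
  case Inf
  let ?U = "insert Inf (Fin ` {w. norm w > 1/\<epsilon>})"
  have "{w. Fin w \<in> ?U} = {w. norm w > 1/\<epsilon>}" by auto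
  moreover have "open {w::complex. norm w > 1/\<epsilon>}"
    by (rule open_Collect_less) (intro continuous_intros)+
  ultimately have "sph_open ?U" by (auto simp: sph_open_def)
  moreover have "p \<in> ?U" using Inf by auto
  moreover have "\<exists>l. l \<noteq> 0 \<and> dist (sc l (hc q)) (hc p) < \<epsilon>" if "q \<in> ?U" for q
  proof (cases q)
    case Inf
    then show ?thesis using \<open>p = Inf\<close> assms
      by (intro exI[of _ 1]) (simp add: sc_def hc_def hx_def hy_def)
  next
    case (Fin w)
    then have nw: "norm w > 1/\<epsilon>" using that by auto
    then have w0: "w \<noteq> 0" using assms by (auto simp: field_simps)
    have "dist (sc (1/w) (hc q)) (hc p) = norm (1/w)"
      using Fin \<open>p = Inf\<close> w0 by (simp add: sc_def hc_def hx_def hy_def dist_Pair_Pair dist_norm)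
    also have "\<dots> = 1 / norm w" by (simp add: norm_divide)
    also have "\<dots> < \<epsilon>" using nw assms w0 by (simp add: field_simps)
    finally show ?thesis using w0 by (intro exI[of _ "1/w"]) simp
  qed
  ultimately show ?thesis by blast
qed

lemma dist_pair_le: "dist (a, b) (c, d) \<le> dist a c + dist b d"
  by (simp add: dist_Pair_Pair sqrt_sum_squares_le_sum)

lemma open_adm: "open5 admissible"
  unfolding open5_def
proof (clarify)
  fix a b c d e
  assume "(a, b, c, d, e) \<in> admissible"
  then have H0: "Hfun (hc a, hc b, hc c, hc d, hc e) \<noteq> 0" by (simp add: adm_Hf Hfun_def)
  have "continuous (at (hc a, hc b, hc c, hc d, hc e)) Hfun"
    using Hfun_cont continuous_on_eq_continuous_at open_UNIV UNIV_I by blast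
  from continuous_at_avoid[OF this H0] obtain r where r: "r > 0"
    and rr: "\<And>y. dist (hc a, hc b, hc c, hc d, hc e) y < r \<Longrightarrow> Hfun y \<noteq> 0" by blast
  have r5: "r/5 > 0" using r by simp
  obtain U1 where U1: "sph_open U1" "a \<in> U1" "\<forall>q\<in>U1. \<exists>l. l \<noteq> 0 \<and> dist (sc l (hc q)) (hc a) < r/5"
    using nbhd[OF r5] by blast
  obtain U2 where U2: "sph_open U2" "b \<in> U2" "\<forall>q\<in>U2. \<exists>l. l \<noteq> 0 \<and> dist (sc l (hc q)) (hc b) < r/5"
    using nbhd[OF r5] by blast
  obtain U3 where U3: "sph_open U3" "c \<in> U3" "\<forall>q\<in>U3. \<exists>l. l \<noteq> 0 \<and> dist (sc l (hc q)) (hc c) < r/5"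
    using nbhd[OF r5] by blast
  obtain U4 where U4: "sph_open U4" "d \<in> U4" "\<forall>q\<in>U4. \<exists>l. l \<noteq> 0 \<and> dist (sc l (hc q)) (hc d) < r/5"
    using nbhd[OF r5] by blast
  obtain U5 where U5: "sph_open U5" "e \<in> U5" "\<forall>q\<in>U5. \<exists>l. l \<noteq> 0 \<and> dist (sc l (hc q)) (hc e) < r/5"
    using nbhd[OF r5] by blast
  have "U1 \<times> U2 \<times> U3 \<times> U4 \<times> U5 \<subseteq> admissible"
  proof clarify
    fix q1 q2 q3 q4 q5
    assume q: "q1 \<in> U1" "q2 \<in> U2" "q3 \<in> U3" "q4 \<in> U4" "q5 \<in> U5"
    obtain l1 where l1: "l1 \<noteq> 0" "dist (sc l1 (hc q1)) (hc a) < r/5" using U1(3) q(1) by blast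
    obtain l2 where l2: "l2 \<noteq> 0" "dist (sc l2 (hc q2)) (hc b) < r/5" using U2(3) q(2) by blast
    obtain l3 where l3: "l3 \<noteq> 0" "dist (sc l3 (hc q3)) (hc c) < r/5" using U3(3) q(3) by blast
    obtain l4 where l4: "l4 \<noteq> 0" "dist (sc l4 (hc q4)) (hc d) < r/5" using U4(3) q(4) by blast
    obtain l5 where l5: "l5 \<noteq> 0" "dist (sc l5 (hc q5)) (hc e) < r/5" using U5(3) q(5) by blast
    let ?y = "(sc l1 (hc q1), sc l2 (hc q2), sc l3 (hc q3), sc l4 (hc q4), sc l5 (hc q5))"
    have "dist (hc a, hc b, hc c, hc d, hc e) ?y \<le>
      dist (hc a) (sc l1 (hc q1)) + (dist (hc b) (sc l2 (hc q2)) + (dist (hc c) (sc l3 (hc q3))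
       + (dist (hc d) (sc l4 (hc q4)) + dist (hc e) (sc l5 (hc q5)))))"
      by (intro order.trans[OF dist_pair_le] add_left_mono) (simp_all add: dist_pair_le)
    also have "\<dots> < r" using l1 l2 l3 l4 l5 by (simp add: dist_commute)
    finally have "Hfun ?y \<noteq> 0" by (rule rr)
    then have "Hf (hc q1) (hc q2) (hc q3) (hc q4) (hc q5) \<noteq> 0"
      using l1 l2 l3 l4 l5 by (simp add: Hfun_def Hf_sc)
    then show "(q1, q2, q3, q4, q5) \<in> admissible" by (simp add: adm_Hf)
  qed
  then show "\<exists>U1 U2 U3 U4 U5. sph_open U1 \<and> sph_open U2 \<and> sph_open U3 \<and> sph_open U4 \<and> sph_open U5 \<and>
      a \<in> U1 \<and> b \<in> U2 \<and> c \<in> U3 \<and> d \<in> U4 \<and> e \<in> U5 \<and> U1 \<times> U2 \<times> U3 \<times> U4 \<times> U5 \<subseteq> admissible"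
    using U1 U2 U3 U4 U5 by blast
qed



definition apol :: "complex poly \<Rightarrow> complex poly \<Rightarrow> bool" where
  "apol T P \<longleftrightarrow> 2*coeff P 0*coeff T 2 - coeff P 1*coeff T 1 + 2*coeff P 2*coeff T 0 = 0"

lemma apol_of_Wr:
  assumes dP: "degree P \<le> 2" and dQ: "degree Q \<le> 2" and W: "Wr P Q = smult e T" and e: "e \<noteq> 0"
  shows "apol T P \<and> apol T Q"
proof -
  have c: "e * coeff T 0 = coeff P 1 * coeff Q 0 - coeff P 0 * coeff Q 1"
     "e * coeff T 1 = 2*(coeff P 2 * coeff Q 0 - coeff P 0 * coeff Q 2)"
     "e * coeff T 2 = coeff P 2 * coeff Q 1 - coeff P 1 * coeff Q 2"
    using arg_cong[OF W, of "\<lambda>p. coeff p 0"] arg_cong[OF W, of "\<lambda>p. coeff p 1"]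
      arg_cong[OF W, of "\<lambda>p. coeff p 2"] Wr_coeffs[OF dP dQ] by simp_all
  have "e * (2*coeff P 0*coeff T 2 - coeff P 1*coeff T 1 + 2*coeff P 2*coeff T 0) = 0"
    using c by algebra
  moreover have "e * (2*coeff Q 0*coeff T 2 - coeff Q 1*coeff T 1 + 2*coeff Q 2*coeff T 0) = 0"
    using c by algebra
  ultimately show ?thesis using e by (simp add: apol_def)
qed

lemma dlt_Tq: "w1 \<noteq> w2 \<Longrightarrow> dlt (Tq w1 w2) \<noteq> 0"
proof -
  assume "w1 \<noteq> w2"
  then have "det2 (hc w1) (hc w2) \<noteq> 0" by (simp add: neq_det)
  moreover have "dlt (Tq w1 w2) = (det2 (hc w1) (hc w2))^2"
    by (simp add: dlt_def Tq_coeffs det2_def hc_def) algebra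
  ultimately show ?thesis by simp
qed

lemma degree_Phi: "degree (Phi a b c) \<le> 3"
  by (subst Phi_coeffs) (auto intro!: order.trans[OF degree_pCons_le])

lemma uniq2:
  assumes "w1 \<noteq> w2" "c \<noteq> 0"
    "apol (Tq w1 w2) P" "apol (Tq w1 w2) Q" "apol (Tq w1 w2) P'" "apol (Tq w1 w2) Q'"
    "degree P \<le> 2" "degree Q \<le> 2" "degree P' \<le> 2" "degree Q' \<le> 2"
    "pCons 0 Q - P = smult c (Phi z1 z2 z3)" "pCons 0 Q' - P' = smult c' (Phi z1 z2 z3)"
  shows "P' = smult (c'/c) P \<and> Q' = smult (c'/c) Q"
proof -
  have dl: "(coeff (Tq w1 w2) 1)^2 - 4 * coeff (Tq w1 w2) 0 * coeff (Tq w1 w2) 2 \<noteq> 0"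
    using dlt_Tq[OF assms(1)] by (simp add: dlt_def power2_eq_square)
  show ?thesis
    by (rule uniq[OF dl assms(2) assms(3-6)[unfolded apol_def] assms(7-12)])
qed

lemma member_norm:
  assumes "(f, z1, z2, z3, w1, w2) \<in> Rat2_tm"
  shows "\<exists>P Q c e. deg2_rep P Q \<and> f = ratmap2 P Q \<and> c \<noteq> 0 \<and> e \<noteq> 0 \<and> w1 \<noteq> w2 \<and>
     pCons 0 Q - P = smult c (Phi z1 z2 z3) \<and> Wr P Q = smult e (Tq w1 w2)"
proof -
  from assms obtain P Q where PQ: "deg2_rep P Q" "f = ratmap2 P Q"
    "\<forall>w. count {#z1, z2, z3#} w = fix_mult P Q w" "critical_points P Q = {w1, w2}" and ne: "w1 \<noteq> w2"
    by (auto simp: Rat2_tm_def)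
  obtain c where c: "c \<noteq> 0" "pCons 0 Q - P = smult c (Phi z1 z2 z3)" using normalize_F[OF PQ(1,3)] by blast
  obtain e where e: "e \<noteq> 0" "Wr P Q = smult e (Tq w1 w2)" using normalize_W[OF PQ(1,4) ne] by blast
  show ?thesis using PQ ne c e by blast
qed

lemma member_apol:
  assumes "deg2_rep P Q" "e \<noteq> 0" "Wr P Q = smult e (Tq w1 w2)"
  shows "apol (Tq w1 w2) P \<and> apol (Tq w1 w2) Q \<and> degree P \<le> 2 \<and> degree Q \<le> 2"
  using apol_of_Wr deg2_rep_degs assms by blast

lemma smult_cancel_poly: "smult a T = smult b T \<Longrightarrow> T \<noteq> 0 \<Longrightarrow> a = (b::complex)"
proof -
  assume "smult a T = smult b T" "T \<noteq> 0"
  then have "smult (a - b) T = 0" by (simp add: smult_diff_left)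
  with \<open>T \<noteq> 0\<close> show ?thesis by simp
qed

abbreviation "SP z1 z2 z3 w1 w2 \<equiv> solP (Phi z1 z2 z3) (Tq w1 w2)"
abbreviation "SQ z1 z2 z3 w1 w2 \<equiv> solQ (Phi z1 z2 z3) (Tq w1 w2)"

lemma sol_props:
  shows "apol (Tq w1 w2) (SP z1 z2 z3 w1 w2)" "apol (Tq w1 w2) (SQ z1 z2 z3 w1 w2)"
    "pCons 0 (SQ z1 z2 z3 w1 w2) - SP z1 z2 z3 w1 w2 = smult (dlt (Tq w1 w2)) (Phi z1 z2 z3)"
  using sol_aP sol_aQ sol_F[OF degree_Phi] by (auto simp: apol_def)

lemma image_adm:
  assumes "(f, z1, z2, z3, w1, w2) \<in> Rat2_tm"
  shows "(z1, z2, z3, w1, w2) \<in> admissible"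
proof -
  obtain P Q c e where h: "deg2_rep P Q" "f = ratmap2 P Q" "c \<noteq> 0" "e \<noteq> 0" "w1 \<noteq> w2"
     "pCons 0 Q - P = smult c (Phi z1 z2 z3)" "Wr P Q = smult e (Tq w1 w2)"
    using member_norm[OF assms] by blast
  have a: "apol (Tq w1 w2) P" "apol (Tq w1 w2) Q" "degree P \<le> 2" "degree Q \<le> 2"
    using member_apol[OF h(1,4,7)] by auto
  define k where "k = dlt (Tq w1 w2) / c"
  have k0: "k \<noteq> 0" using dlt_Tq[OF h(5)] h(3) by (simp add: k_def)
  have u: "SP z1 z2 z3 w1 w2 = smult k P \<and> SQ z1 z2 z3 w1 w2 = smult k Q"
    unfolding k_def
    by (rule uniq2[OF h(5) h(3) a(1,2) sol_props(1,2) a(3,4) deg_solP deg_solQ h(6) sol_props(3)])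
  have "smult (2 * NN z1 z2 z3 w1 w2) (Tq w1 w2) = smult (k^2 * e) (Tq w1 w2)"
    using sol_W[of z1 z2 z3 w1 w2] u Wr_smult[of k P Q] h(7) by simp
  then have "2 * NN z1 z2 z3 w1 w2 = k^2 * e" using Tq_nz by (rule smult_cancel_poly)
  then have "NN z1 z2 z3 w1 w2 \<noteq> 0" using k0 h(4) by auto
  then show ?thesis using h(5) by (simp add: adm_iff)
qed

lemma adm_image:
  assumes "(z1, z2, z3, w1, w2) \<in> admissible"
  shows "(ratmap2 (SP z1 z2 z3 w1 w2) (SQ z1 z2 z3 w1 w2), z1, z2, z3, w1, w2) \<in> Rat2_tm"
proof -
  have ne: "w1 \<noteq> w2" and N0: "NN z1 z2 z3 w1 w2 \<noteq> 0" using assms by (auto simp: adm_iff)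
  let ?S = "SP z1 z2 z3 w1 w2" and ?R = "SQ z1 z2 z3 w1 w2"
  let ?T = "Tq w1 w2"
  have "(coeff ?S 2 * coeff ?R 0 - coeff ?S 0 * coeff ?R 2)^2
     - (coeff ?S 2 * coeff ?R 1 - coeff ?S 1 * coeff ?R 2) * (coeff ?S 1 * coeff ?R 0 - coeff ?S 0 * coeff ?R 1)
     = (NN z1 z2 z3 w1 w2 * coeff ?T 1)^2 - (2 * NN z1 z2 z3 w1 w2 * coeff ?T 2) * (2 * NN z1 z2 z3 w1 w2 * coeff ?T 0)"
    by (simp only: sol_W_coeffs)
  also have "\<dots> = (NN z1 z2 z3 w1 w2)^2 * dlt ?T"
    by (simp add: dlt_def power2_eq_square algebra_simps)
  finally have res: "(coeff ?S 2 * coeff ?R 0 - coeff ?S 0 * coeff ?R 2)^2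
     - (coeff ?S 2 * coeff ?R 1 - coeff ?S 1 * coeff ?R 2) * (coeff ?S 1 * coeff ?R 0 - coeff ?S 0 * coeff ?R 1) \<noteq> 0"
    using N0 dlt_Tq[OF ne] by simp
  have d2: "deg2_rep ?S ?R"
    using res_deg2[OF res] deg2_expand[OF deg_solP, symmetric] deg2_expand[OF deg_solQ, symmetric] by metis
  have fx: "\<forall>w. count {#z1, z2, z3#} w = fix_mult ?S ?R w"
  proof
    fix w
    have "fix_mult ?S ?R w = form_mult 3 (smult (dlt ?T) (Phi z1 z2 z3)) w"
      by (simp add: fix_mult_def sol_props(3))
    also have "\<dots> = count {#z1, z2, z3#} w"
      using dlt_Tq[OF ne] by (simp add: form_mult_smult form_mult_Phi)
    finally show "count {#z1, z2, z3#} w = fix_mult ?S ?R w" by simp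
  qed
  have cr: "critical_points ?S ?R = {w1, w2}"
  proof -
    have "crit_mult ?S ?R w = count {#w1, w2#} w" for w
    proof -
      have "crit_mult ?S ?R w = form_mult 2 (smult (2 * NN z1 z2 z3 w1 w2) ?T) w"
        by (simp add: crit_mult_def sol_W)
      also have "\<dots> = count {#w1, w2#} w"
        using N0 by (simp add: form_mult_smult form_mult_Tq)
      finally show ?thesis .
    qed
    then show ?thesis by (auto simp: critical_points_def)
  qed
  show ?thesis using d2 fx cr ne by (auto simp: Rat2_tm_def Rat2_def)
qed

theorem mainTheorem15:
  shows "bij_betw (\<lambda>(f, z1, z2, z3, w1, w2). (z1, z2, z3, w1, w2)) Rat2_tm admissible
         \<and> open5 admissible"
proof
  show "open5 admissible" by (rule open_adm)
  show "bij_betw (\<lambda>(f, z1, z2, z3, w1, w2). (z1, z2, z3, w1, w2)) Rat2_tm admissible"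
    unfolding bij_betw_def
  proof
    show "inj_on (\<lambda>(f, z1, z2, z3, w1, w2). (z1, z2, z3, w1, w2)) Rat2_tm"
    proof (rule inj_onI)
      fix x y
      assume x: "x \<in> Rat2_tm" and y: "y \<in> Rat2_tm"
        and g: "(\<lambda>(f, z1, z2, z3, w1, w2). (z1, z2, z3, w1, w2)) x = (\<lambda>(f, z1, z2, z3, w1, w2). (z1, z2, z3, w1, w2)) y"
      obtain f z1 z2 z3 w1 w2 where xe: "x = (f, z1, z2, z3, w1, w2)" by (cases x) auto
      obtain f' where ye: "y = (f', z1, z2, z3, w1, w2)" using g xe by (cases y) auto
      have m: "(f, z1, z2, z3, w1, w2) \<in> Rat2_tm" using x xe by simp
      have m': "(f', z1, z2, z3, w1, w2) \<in> Rat2_tm" using y ye by simp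
      obtain P Q c e where h: "deg2_rep P Q" "f = ratmap2 P Q" "c \<noteq> 0" "e \<noteq> 0" "w1 \<noteq> w2"
         "pCons 0 Q - P = smult c (Phi z1 z2 z3)" "Wr P Q = smult e (Tq w1 w2)"
        using member_norm[OF m] by blast
      obtain P' Q' c' e' where h': "deg2_rep P' Q'" "f' = ratmap2 P' Q'" "c' \<noteq> 0" "e' \<noteq> 0"
         "pCons 0 Q' - P' = smult c' (Phi z1 z2 z3)" "Wr P' Q' = smult e' (Tq w1 w2)"
        using member_norm[OF m'] by blast
      have a: "apol (Tq w1 w2) P" "apol (Tq w1 w2) Q" "degree P \<le> 2" "degree Q \<le> 2"
        using member_apol[OF h(1,4,7)] by auto
      have a': "apol (Tq w1 w2) P'" "apol (Tq w1 w2) Q'" "degree P' \<le> 2" "degree Q' \<le> 2"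
        using member_apol[OF h'(1,4,6)] by auto
      have u: "P' = smult (c'/c) P \<and> Q' = smult (c'/c) Q"
        by (rule uniq2[OF h(5) h(3) a(1,2) a'(1,2) a(3,4) a'(3,4) h(6) h'(5)])
      have "c'/c \<noteq> 0" using h(3) h'(3) by simp
      then have "f = f'" using u h(2) h'(2) by (simp add: ratmap2_smult)
      then show "x = y" using xe ye by simp
    qed
  next
    show "(\<lambda>(f, z1, z2, z3, w1, w2). (z1, z2, z3, w1, w2)) ` Rat2_tm = admissible"
    proof
      show "(\<lambda>(f, z1, z2, z3, w1, w2). (z1, z2, z3, w1, w2)) ` Rat2_tm \<subseteq> admissible"
        using image_adm by auto
      show "admissible \<subseteq> (\<lambda>(f, z1, z2, z3, w1, w2). (z1, z2, z3, w1, w2)) ` Rat2_tm"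
      proof clarify
        fix z1 z2 z3 w1 w2
        assume "(z1, z2, z3, w1, w2) \<in> admissible"
        from adm_image[OF this] show "(z1, z2, z3, w1, w2) \<in> (\<lambda>(f, z1, z2, z3, w1, w2). (z1, z2, z3, w1, w2)) ` Rat2_tm"
          by (rule rev_image_eqI) simp
      qed
    qed
  qed
qed


end
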